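(* Let $p$ be a prime, $n\ge1$, $\mathbb{F}=\mathbb{F}_{p^n}$, $F=p^n$, and $g:\mathbb{F}\to[0,1]$. Let $k\ge 2$ be an integer, let $n'$ be an integer with $$1+\frac{\log\binom{k}{2}}{\log p}\ \le\ n'\ <\ 2+\frac{\log\binom{k}{2}}{\log p},\qquad n'\le n,$$ and let $S$ be the set of all $\mathbb{F}_p$-subspaces of $\mathbb{F}$ of dimension $n'$. If $\mathbb{E}(g)>8p^{-1/2}k^{-1}$, then when $t\in\mathbb{F}$ and $W\in S$ are chosen independently and uniformly at random, $$\sum_{m\in t+W}g(m)\ \ge\ \mathbb{E}(g)\,|W|/2$$ holds with probability exceeding $3/4$.
   Context: $\mathbb{E}(g)=F^{-1}\sum_{m\in\mathbb{F}}g(m)$. *)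

theory Defs
  imports Complex_Main "HOL-Library.Cardinality" "HOL-Computational_Algebra.Primes"
begin

definition expect :: "('a::finite \<Rightarrow> real) \<Rightarrow> real" where
  "expect g = (\<Sum>m\<in>UNIV. g m) / real CARD('a)"

text \<open>F_p-subspace of a field of characteristic p: contains 0, closed under
  addition and under multiplication by the scalars of the prime field
  (i.e. by of_nat c).\<close>
definition prime_subspace :: "'a::field set \<Rightarrow> bool" where
  "prime_subspace W \<longleftrightarrow> 0 \<in> W \<and> (\<forall>x\<in>W. \<forall>y\<in>W. x + y \<in> W)
      \<and> (\<forall>c::nat. \<forall>x\<in>W. of_nat c * x \<in> W)"

text \<open>The set of F_p-subspaces of dimension d (a finite F_p-space has
  dimension d iff it has p^d elements).\<close>
definition subspaces_dim :: "nat \<Rightarrow> nat \<Rightarrow> 'a::{field,finite} set set" where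
  "subspaces_dim p d = {W. prime_subspace W \<and> card W = p ^ d}"

definition translate :: "'a::plus \<Rightarrow> 'a set \<Rightarrow> 'a set" where
  "translate t W = (\<lambda>w. t + w) ` W"

end

theory Submission
  imports Defs
begin



lemma subsp_neg:
  fixes W :: "'a::{field,finite} set"
  assumes "prime_subspace W" "x \<in> W" shows "-x \<in> W"
proof -
  have "(\<lambda>y. x + y) ` W = W"
    by (rule endo_inj_surj) (use assms in \<open>auto simp: prime_subspace_def inj_on_def\<close>)
  moreover have "0 \<in> W" using assms by (simp add: prime_subspace_def)
  ultimately obtain y where "y \<in> W" "x + y = 0" by (metis imageE)
  then show ?thesis by (metis add.commute add_eq_0_iff)
qed

lemma subsp_diff:
  fixes W :: "'a::{field,finite} set"
  assumes "prime_subspace W" "x \<in> W" "y \<in> W" shows "y - x \<in> W"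
  using subsp_neg[OF assms(1,2)] assms unfolding prime_subspace_def diff_conv_add_uminus by blast

lemma of_nat_mod_CHAR: "(of_nat (n mod CHAR('a)) :: 'a::comm_ring_1) = of_nat n"
proof -
  have "(of_nat n :: 'a) = of_nat (n div CHAR('a) * CHAR('a) + n mod CHAR('a))" by simp
  also have "\<dots> = of_nat (n mod CHAR('a))" by (simp only: of_nat_add of_nat_mult of_nat_CHAR) simp
  finally show ?thesis by simp
qed

lemma subsp_extend:
  fixes H :: "'a::{field,finite} set"
  assumes H: "prime_subspace H" and x: "x \<notin> H"
  shows "\<exists>H'::'a set. prime_subspace H' \<and> card H' = card H * CHAR('a)"
proof -
  define q where "q = CHAR('a)"
  have qpos: "q > 0" unfolding q_def by (rule finite_imp_CHAR_pos) simp
  have qprime: "prime q" using qpos unfolding q_def by (rule prime_CHAR_semidom)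
  define f where "f = (\<lambda>(h, i). h + of_nat i * x :: 'a)"
  define H' where "H' = f ` (H \<times> {..<q})"
  have modq: "(of_nat (n mod q) :: 'a) = of_nat n" for n unfolding q_def by (rule of_nat_mod_CHAR)
  have inj: "inj_on f (H \<times> {..<q})"
  proof (rule inj_onI, clarify)
    fix h i h' i' assume h: "h \<in> H" "i < q" "h' \<in> H" "i' < q" and eq: "f (h, i) = f (h', i')"
    have key: False if "j < q" "j' < q" "j' < j" "g \<in> H" "g' \<in> H" "g + of_nat j * x = g' + of_nat j' * x" for j j' g g'
    proof -
      have "of_nat (j - j') * x = g' - g" using that
        by (simp add: of_nat_diff algebra_simps)
      hence d: "of_nat (j - j') * x \<in> H" using subsp_diff[OF H \<open>g \<in> H\<close> \<open>g' \<in> H\<close>] by simp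
      have "j - j' \<noteq> 0" using that by simp
      from bezout_nat[OF this, of q] obtain a b where ab: "(j - j') * a = q * b + gcd (j - j') q" by blast
      have "\<not> q dvd (j - j')" using that by (auto dest: dvd_imp_le)
      hence "coprime (j - j') q"
        using qprime prime_imp_coprime coprime_commute by blast
      hence "gcd (j - j') q = 1" by simp
      hence "(of_nat ((j - j') * a) :: 'a) = of_nat (q * b) + 1" using ab by simp
      also have "(of_nat (q * b) :: 'a) = 0" unfolding q_def by simp
      finally have "(of_nat ((j - j') * a) :: 'a) = 1" by simp
      hence "of_nat a * (of_nat (j - j') * x) = x"
        by (metis mult.assoc mult.commute mult_1 of_nat_mult)
      moreover have "of_nat a * (of_nat (j - j') * x) \<in> H" using H d by (simp add: prime_subspace_def)
      ultimately show False using x by metis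
    qed
    from eq have eq': "h + of_nat i * x = h' + of_nat i' * x" by (simp add: f_def)
    have "i = i'"
    proof (rule ccontr)
      assume "i \<noteq> i'"
      then consider "i' < i" | "i < i'" by linarith
      then show False
      proof cases
        case 1 then show ?thesis using key[of i i' h h'] h eq' by blast
      next
        case 2 then show ?thesis using key[of i' i h' h] h eq' by metis
      qed
    qed
    then show "h = h' \<and> i = i'" using eq' by simp
  qed
  have "prime_subspace H'"
    unfolding prime_subspace_def
  proof (intro conjI ballI allI)
    show "0 \<in> H'" unfolding H'_def f_def using H qpos
      by (auto simp: prime_subspace_def image_iff intro!: bexI[of _ "0::'a"] bexI[of _ "0::nat"])
  next
    fix y z assume "y \<in> H'" "z \<in> H'"
    then obtain h i h' i' where y: "y = h + of_nat i * x" "h \<in> H" and z: "z = h' + of_nat i' * x" "h' \<in> H"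
      unfolding H'_def f_def by auto
    have "y + z = (h + h') + of_nat ((i + i') mod q) * x" unfolding y z modq by (simp add: algebra_simps)
    moreover have "h + h' \<in> H" using H y z by (simp add: prime_subspace_def)
    moreover have "(i + i') mod q < q" using qpos by simp
    ultimately show "y + z \<in> H'" unfolding H'_def f_def by (auto simp: image_iff)
  next
    fix c :: nat and y assume "y \<in> H'"
    then obtain h i where y: "y = h + of_nat i * x" "h \<in> H"
      unfolding H'_def f_def by auto
    have "of_nat c * y = of_nat c * h + of_nat ((c * i) mod q) * x" unfolding y modq by (simp add: algebra_simps)
    moreover have "of_nat c * h \<in> H" using H y by (simp add: prime_subspace_def)
    moreover have "(c * i) mod q < q" using qpos by simp
    ultimately show "of_nat c * y \<in> H'" unfolding H'_def f_def by (auto simp: image_iff)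
  qed
  moreover have "card H' = card H * q" unfolding H'_def using card_image[OF inj] by (simp add: card_cartesian_product)
  ultimately show ?thesis unfolding q_def by blast
qed

lemma subsp_zero: "prime_subspace {0::'a::field}"
  by (simp add: prime_subspace_def)

lemma subsp_chain:
  "\<exists>H::'a::{field,finite} set. prime_subspace H \<and> (\<exists>i\<le>j. card H = CHAR('a) ^ i) \<and> (card H = CHAR('a) ^ j \<or> H = UNIV)"
proof (induction j)
  case 0 show ?case using subsp_zero by (intro exI[of _ "{0}"]) auto
next
  case (Suc j)
  then obtain H :: "'a set" where H: "prime_subspace H" "\<exists>i\<le>j. card H = CHAR('a) ^ i" "card H = CHAR('a) ^ j \<or> H = UNIV"
    by blast
  show ?case
  proof (cases "H = UNIV")
    case True then show ?thesis using H le_SucI by blast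
  next
    case False
    then obtain x where "x \<notin> H" by blast
    from subsp_extend[OF H(1) this] obtain H' :: "'a set" where "prime_subspace H'" "card H' = card H * CHAR('a)" by blast
    then show ?thesis using H False by (intro exI[of _ H']) (auto simp: mult.commute)
  qed
qed



lemma CHAR_eq:
  assumes "prime p" "n \<ge> 1" "CARD('a::{field,finite}) = p ^ n"
  shows "CHAR('a) = p"
proof -
  define q where "q = CHAR('a)"
  have qprime: "prime q" using finite_imp_CHAR_pos[where 'a='a] unfolding q_def
    by (intro prime_CHAR_semidom) simp
  obtain H :: "'a set" where H: "prime_subspace H" "\<exists>i\<le>CARD('a). card H = q ^ i"
    "card H = q ^ CARD('a) \<or> H = UNIV"
    using subsp_chain[of "CARD('a)"] unfolding q_def by blast
  have "CARD('a) < 2 ^ CARD('a)" by simp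
  also have "\<dots> \<le> q ^ CARD('a)" using qprime by (simp add: power_mono prime_ge_2_nat)
  finally have "card H \<noteq> q ^ CARD('a)" using card_mono[of UNIV H] by fastforce
  with H obtain i where i: "CARD('a) = q ^ i" by auto
  have "card {0::'a, 1} \<le> CARD('a)" by (rule card_mono) auto
  hence "CARD('a) \<ge> 2" by simp
  hence "i \<noteq> 0" using i by (metis One_nat_def power_0 not_less_eq_eq one_le_numeral numeral_le_one_iff semiring_norm(69))
  hence "q dvd p ^ n" using i assms by (metis dvd_power gr0I)
  hence "q dvd p" using qprime prime_dvd_power by blast
  thus ?thesis using primes_dvd_imp_eq qprime assms(1) q_def by blast
qed

lemma subsp_exists:
  assumes "prime p" "n \<ge> 1" "CARD('a::{field,finite}) = p ^ n" "n' \<le> n"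
  shows "\<exists>W::'a set. prime_subspace W \<and> card W = p ^ n'"
proof -
  have q: "CHAR('a) = p" using CHAR_eq assms by blast
  obtain H :: "'a set" where H: "prime_subspace H" "\<exists>i\<le>n'. card H = p ^ i" "card H = p ^ n' \<or> H = UNIV"
    using subsp_chain[of n', where 'a='a] unfolding q by blast
  show ?thesis
  proof (cases "card H = p ^ n'")
    case True then show ?thesis using H by blast
  next
    case False
    with H obtain i where "i \<le> n'" "p ^ n = p ^ i" using assms by auto
    hence "n = i" using assms prime_gt_1_nat power_inject_exp by metis
    hence "n' = n" using \<open>i \<le> n'\<close> assms by simp
    then show ?thesis using H assms False by simp
  qed
qed



lemma sum_shift_univ:
  fixes f :: "'a::{group_add,finite} \<Rightarrow> real"
  shows "(\<Sum>t\<in>UNIV. f (t + a)) = (\<Sum>t\<in>UNIV. f t)"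
  by (rule sum.reindex_bij_witness[of _ "\<lambda>t. t - a" "\<lambda>t. t + a"]) auto

lemma first_moment:
  fixes g :: "'a::{field,finite} \<Rightarrow> real"
  shows "(\<Sum>t\<in>UNIV. \<Sum>x\<in>W. g (t + x)) = real (card W) * (\<Sum>m\<in>UNIV. g m)"
  by (subst sum.swap) (simp add: sum_shift_univ)

lemma second_moment:
  fixes g :: "'a::{field,finite} \<Rightarrow> real"
  assumes W: "prime_subspace W"
  shows "(\<Sum>t\<in>UNIV. (\<Sum>x\<in>W. g (t + x))^2) =
         real (card W) * (\<Sum>d\<in>W. \<Sum>u\<in>UNIV. g u * g (u + d))"
proof -
  define R where "R d = (\<Sum>u\<in>UNIV. g u * g (u + d))" for d
  have "(\<Sum>t\<in>UNIV. (\<Sum>x\<in>W. g (t + x))^2) = (\<Sum>t\<in>UNIV. \<Sum>x\<in>W. \<Sum>y\<in>W. g (t + x) * g (t + y))"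
    by (simp add: power2_eq_square sum_product)
  also have "\<dots> = (\<Sum>x\<in>W. \<Sum>y\<in>W. \<Sum>t\<in>UNIV. g (t + x) * g (t + y))"
    by (subst sum.swap) (simp add: sum.swap[where A = UNIV])
  also have "\<dots> = (\<Sum>x\<in>W. \<Sum>y\<in>W. R (y - x))"
  proof (intro sum.cong refl)
    fix x y
    show "(\<Sum>t\<in>UNIV. g (t + x) * g (t + y)) = R (y - x)"
      unfolding R_def using sum_shift_univ[of "\<lambda>u. g u * g (u + (y - x))" x]
      by (simp add: algebra_simps)
  qed
  also have "\<dots> = (\<Sum>x\<in>W. \<Sum>d\<in>W. R d)"
  proof (rule sum.cong[OF refl])
    fix x assume x: "x \<in> W"
    show "(\<Sum>y\<in>W. R (y - x)) = (\<Sum>d\<in>W. R d)"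
    proof (rule sum.reindex_bij_witness[of _ "\<lambda>d. d + x" "\<lambda>y. y - x"])
      fix y assume "y \<in> W" then show "y - x \<in> W" using subsp_diff[OF W x] by blast
    next
      fix d assume "d \<in> W" then show "d + x \<in> W" using W x by (simp add: prime_subspace_def)
    qed auto
  qed
  also have "\<dots> = real (card W) * (\<Sum>d\<in>W. R d)" by simp
  finally show ?thesis unfolding R_def .
qed

lemma sum_R:
  fixes g :: "'a::{field,finite} \<Rightarrow> real"
  shows "(\<Sum>d\<in>UNIV. \<Sum>u\<in>UNIV. g u * g (u + d)) = (\<Sum>m\<in>UNIV. g m)^2"
proof -
  have "(\<Sum>d\<in>UNIV. \<Sum>u\<in>UNIV. g u * g (u + d)) = (\<Sum>u\<in>UNIV. g u * (\<Sum>d\<in>UNIV. g (d + u)))"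
    by (subst sum.swap) (simp add: sum_distrib_left add.commute)
  also have "\<dots> = (\<Sum>u\<in>UNIV. g u * (\<Sum>m\<in>UNIV. g m))" by (simp add: sum_shift_univ)
  finally show ?thesis by (simp add: power2_eq_square sum_distrib_right)
qed

lemma swap_count:
  fixes h :: "'a::finite \<Rightarrow> real" and S :: "'a set set"
  shows "(\<Sum>W\<in>S. \<Sum>d\<in>W. h d) = (\<Sum>d\<in>UNIV. h d * real (card {W\<in>S. d \<in> W}))"
proof -
  have "(\<Sum>W\<in>S. \<Sum>d\<in>W. h d) = (\<Sum>W\<in>S. \<Sum>d\<in>UNIV. if d \<in> W then h d else 0)"
    by (rule sum.cong[OF refl]) (use sum.inter_restrict[of UNIV h] in simp)
  also have "\<dots> = (\<Sum>d\<in>UNIV. \<Sum>W\<in>S. if d \<in> W then h d else 0)" by (rule sum.swap)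
  also have "\<dots> = (\<Sum>d\<in>UNIV. h d * real (card {W\<in>S. d \<in> W}))"
    by (rule sum.cong[OF refl]) (use sum.inter_filter[of S "\<lambda>_. h _"] in \<open>simp add: mult.commute\<close>)
  finally show ?thesis .
qed

lemma subsp_scale:
  fixes W :: "'a::field set"
  assumes "prime_subspace W" shows "prime_subspace ((\<lambda>x. a * x) ` W)"
  using assms unfolding prime_subspace_def
  by (auto simp: image_iff distrib_left[symmetric] mult.left_commute[of _ a])

lemma count_sym:
  fixes d :: "'a::{field,finite}"
  assumes "d \<noteq> 0"
  shows "card {W \<in> subspaces_dim p m. d \<in> W} = card {W \<in> subspaces_dim p m. (1::'a) \<in> W}"
proof -
  have "bij_betw (\<lambda>W. (\<lambda>x. x / d) ` W) {W \<in> subspaces_dim p m. d \<in> W} {W \<in> subspaces_dim p m. (1::'a) \<in> W}"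
  proof (rule bij_betw_byWitness[where f' = "\<lambda>W. (\<lambda>x. d * x) ` W"])
    show "\<forall>W\<in>{W \<in> subspaces_dim p m. d \<in> W}. (\<lambda>x. d * x) ` (\<lambda>x. x / d) ` W = W"
      using assms by (auto simp: image_image)
    show "\<forall>W\<in>{W \<in> subspaces_dim p m. 1 \<in> W}. (\<lambda>x. x / d) ` (\<lambda>x. d * x) ` W = W"
      using assms by (auto simp: image_image)
    show "(\<lambda>W. (\<lambda>x. x / d) ` W) ` {W \<in> subspaces_dim p m. d \<in> W} \<subseteq> {W \<in> subspaces_dim p m. 1 \<in> W}"
    proof clarify
      fix W assume W: "W \<in> subspaces_dim p m" "d \<in> W"
      have "(\<lambda>x. x / d) ` W = (\<lambda>x. inverse d * x) ` W" by (simp add: divide_inverse mult.commute)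
      moreover have "card ((\<lambda>x. inverse d * x) ` W) = card W"
        by (rule card_image) (use assms in \<open>auto simp: inj_on_def\<close>)
      ultimately show "(\<lambda>x. x / d) ` W \<in> subspaces_dim p m \<and> 1 \<in> (\<lambda>x. x / d) ` W"
        using W subsp_scale[of W "inverse d"] assms
        by (auto simp: subspaces_dim_def image_iff intro!: bexI[of _ d])
    qed
    show "(\<lambda>W. (\<lambda>x. d * x) ` W) ` {W \<in> subspaces_dim p m. 1 \<in> W} \<subseteq> {W \<in> subspaces_dim p m. d \<in> W}"
    proof clarify
      fix W assume W: "W \<in> subspaces_dim p m" "(1::'a) \<in> W"
      have "card ((\<lambda>x. d * x) ` W) = card W"
        by (rule card_image) (use assms in \<open>auto simp: inj_on_def\<close>)
      then show "(\<lambda>x. d * x) ` W \<in> subspaces_dim p m \<and> d \<in> (\<lambda>x. d * x) ` W"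
        using W subsp_scale[of W d] assms
        by (auto simp: subspaces_dim_def image_iff intro!: bexI[of _ 1])
    qed
  qed
  then show ?thesis by (rule bij_betw_same_card)
qed



lemma numeric:
  fixes p k n' :: nat and \<mu> :: real
  assumes p: "prime p" and k: "k \<ge> 2"
    and n1: "1 + ln (real (k choose 2)) / ln (real p) \<le> real n'"
    and mu: "\<mu> > 8 * real p powr (-1/2) / real k" and mu1: "\<mu> \<le> 1"
  shows "real p ^ n' * \<mu> > 16"
proof -
  define C where "C = real (k choose 2)"
  have p2: "real p \<ge> 2" using p prime_ge_2_nat by simp
  have lp: "ln (real p) > 0" using p2 by simp
  have Cdef: "2 * C = real k * (real k - 1)"
  proof -
    have "even (k * (k - 1))" by auto
    hence "real (k * (k - 1) div 2) * 2 = real (k * (k - 1))"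
      by (metis dvd_div_mult_self of_nat_mult of_nat_numeral)
    thus ?thesis unfolding C_def choose_two using k by (simp add: of_nat_diff)
  qed
  have C1: "C \<ge> 1"
  proof -
    have "real k * (real k - 1) \<ge> 2 * 1" using k by (intro mult_mono) auto
    thus ?thesis using Cdef by simp
  qed
  have "ln C / ln (real p) \<le> real n' - 1" using n1 unfolding C_def by simp
  hence "ln C \<le> (real n' - 1) * ln (real p)" using lp by (simp add: divide_le_eq)
  moreover have n'1: "n' \<ge> 1"
  proof -
    have "ln C \<ge> 0" using C1 by simp
    hence "ln C / ln (real p) \<ge> 0" using lp by simp
    thus ?thesis using n1 unfolding C_def by linarith
  qed
  ultimately have "ln C \<le> ln (real p ^ (n' - 1))" by (simp add: ln_realpow of_nat_diff)
  hence Cle: "C \<le> real p ^ (n' - 1)" using C1 p2 by (subst (asm) ln_le_cancel_iff) auto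
  have w: "real p ^ n' \<ge> real p * C"
  proof -
    have "real p ^ n' = real p * real p ^ (n' - 1)" using n'1 by (metis Suc_diff_le diff_Suc_1 power_Suc)
    thus ?thesis using Cle p2 by simp
  qed
  define r where "r = sqrt (real p)"
  have r0: "r > 0" using p2 r_def by simp
  have rr: "r * r = real p" using p2 r_def by simp
  have "real p powr (-1/2) = 1 / r" unfolding r_def using p2
    by (simp add: powr_minus_divide powr_half_sqrt)
  hence "8 * (1 / r) / real k < \<mu>" using mu by simp
  hence "8 / (r * real k) < \<mu>" by simp
  hence mu': "\<mu> * (r * real k) > 8" using r0 k by (simp add: divide_less_eq mult.commute)
  have rk: "r * real k > 8"
  proof -
    have "\<mu> * (r * real k) \<le> r * real k" using mu1 r0 k by (simp add: mult_left_le_one_le)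
    thus ?thesis using mu' by simp
  qed
  have A: "real p ^ n' * \<mu> \<ge> real p * C * \<mu>" using w mu' r0 k mult_right_mono
    by (metis less_eq_real_def linorder_not_le mult_pos_pos mult_zero_left of_nat_0_le_iff order_less_trans zero_less_numeral)
  have B: "real p * C * \<mu> = (\<mu> * (r * real k)) * (r * (real k - 1)) / 2"
  proof -
    have "(\<mu> * (r * real k)) * (r * (real k - 1)) / 2 = \<mu> * (r*r) * (real k * (real k - 1)) / 2"
      by (simp add: algebra_simps)
    also have "\<dots> = \<mu> * real p * (2*C) / 2" by (simp only: rr Cdef)
    finally have "(\<mu> * (r * real k)) * (r * (real k - 1)) / 2 = \<mu> * real p * (2*C) / 2" .
    then show ?thesis by (simp add: ac_simps) metis
  qed
  have D: "(\<mu> * (r * real k)) * (r * (real k - 1)) / 2 > 8 * (r * (real k - 1)) / 2"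
    using mu' r0 k by (intro divide_strict_right_mono mult_strict_right_mono) auto
  have "r * (real k - 1) \<ge> r * real k / 2" using k r0 by (simp add: field_simps)
  hence "8 * (r * (real k - 1)) / 2 > 16" using rk by linarith
  then show ?thesis using A B D by linarith
qed



theorem lemma2:
  fixes g :: "'a::{field,finite} \<Rightarrow> real"
    and p n k n' :: nat
  assumes "prime p" and "n \<ge> 1" and "CARD('a) = p ^ n"
    and "\<And>x. 0 \<le> g x \<and> g x \<le> 1"
    and "k \<ge> 2"
    and "1 + ln (real (k choose 2)) / ln (real p) \<le> real n'"
    and "real n' < 2 + ln (real (k choose 2)) / ln (real p)"
    and "n' \<le> n"
    and "expect g > 8 * real p powr (-1/2) / real k"
  shows "real (card {(t, W). W \<in> subspaces_dim p n' \<and>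
              (\<Sum>m\<in>translate t W. g m) \<ge> expect g * real (card W) / 2})
         / (real CARD('a) * real (card (subspaces_dim p n' :: 'a set set))) > 3/4"
proof -
  define S where "S = (subspaces_dim p n' :: 'a set set)"
  define N where "N = card S"
  define F where "F = CARD('a)"
  define w where "w = p ^ n'"
  define s where "s = (\<Sum>m\<in>UNIV. g m)"
  define \<mu> where "\<mu> = expect g"
  define X where "X t W = (\<Sum>x\<in>W. g (t + x))" for t W
  define R where "R d = (\<Sum>u\<in>UNIV. g u * g (u + d))" for d
  define Q where "Q = R 0"
  have g01: "0 \<le> g x" "g x \<le> 1" for x using assms(4) by auto
  have F2: "real F \<ge> 2"
  proof -
    have "card {0::'a, 1} \<le> CARD('a)" by (rule card_mono) auto
    thus ?thesis unfolding F_def by simp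
  qed
  have mu_s: "\<mu> = s / real F" by (simp add: \<mu>_def s_def F_def expect_def)
  have Sfin: "finite S" by simp
  have SW: "prime_subspace W" "card W = w" if "W \<in> S" for W
    using that by (auto simp: S_def subspaces_dim_def w_def)
  obtain W0 :: "'a set" where W0: "prime_subspace W0" "card W0 = p ^ n'"
    using subsp_exists[OF assms(1,2,3,8)] by blast
  have W0S: "W0 \<in> S" using W0 by (simp add: S_def subspaces_dim_def)
  have Npos: "N > 0" unfolding N_def using W0S Sfin card_gt_0_iff by blast
  have wF: "w \<le> F" using W0 card_mono[of UNIV W0] by (simp add: w_def F_def)
  have s0: "s \<ge> 0" unfolding s_def using g01 by (simp add: sum_nonneg)
  have sF: "s \<le> real F" unfolding s_def F_def using g01 sum_mono[of UNIV g "\<lambda>_. 1"] by simp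
  have QQ: "Q = (\<Sum>u\<in>UNIV. g u * g u)" by (simp add: Q_def R_def)
  have Qs: "Q \<le> s" unfolding QQ s_def
    by (rule sum_mono) (use g01 in \<open>simp add: mult_left_le_one_le\<close>)
  have cnt0: "card {W\<in>S. (0::'a) \<in> W} = N"
    unfolding N_def using SW by (metis (mono_tags, lifting) Collect_cong Collect_mem_eq prime_subspace_def)
  define c where "c = card {W\<in>S. (1::'a) \<in> W}"
  have cntd: "card {W\<in>S. d \<in> W} = c" if "d \<noteq> 0" for d
    unfolding c_def S_def using count_sym[OF that] by blast
  have cardUm: "card (UNIV - {0::'a}) = F - 1" by (simp add: F_def card_Diff_subset)
  have sumcnt: "real N * real w = real N + (real F - 1) * real c"
  proof -
    have "(\<Sum>W\<in>S. \<Sum>d\<in>W. (1::real)) = (\<Sum>d\<in>UNIV. 1 * real (card {W\<in>S. d \<in> W}))"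
      by (rule swap_count)
    also have "\<dots> = real (card {W\<in>S. (0::'a) \<in> W}) + (\<Sum>d\<in>UNIV - {0}. real (card {W\<in>S. d \<in> W}))"
      by (simp add: sum.remove[of UNIV 0])
    also have "\<dots> = real N + (\<Sum>d\<in>UNIV - {0::'a}. real c)"
      using cnt0 cntd by simp
    also have "\<dots> = real N + (real F - 1) * real c" using cardUm F2 by (simp add: of_nat_diff)
    finally show ?thesis using SW by (simp add: N_def)
  qed
  have T1: "(\<Sum>W\<in>S. \<Sum>t\<in>UNIV. X t W) = real N * real w * s"
    unfolding X_def using SW by (simp add: first_moment s_def N_def)
  have sumR: "(\<Sum>d\<in>UNIV. R d) = s^2" unfolding R_def s_def by (rule sum_R)
  have T2: "(\<Sum>W\<in>S. \<Sum>t\<in>UNIV. (X t W)^2) = real w * (real N * Q + real c * (s^2 - Q))"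
  proof -
    have "(\<Sum>W\<in>S. \<Sum>t\<in>UNIV. (X t W)^2) = (\<Sum>W\<in>S. real w * (\<Sum>d\<in>W. R d))"
      unfolding X_def R_def using SW by (intro sum.cong refl) (simp add: second_moment)
    also have "\<dots> = real w * (\<Sum>W\<in>S. \<Sum>d\<in>W. R d)" by (simp add: sum_distrib_left)
    also have "(\<Sum>W\<in>S. \<Sum>d\<in>W. R d) = (\<Sum>d\<in>UNIV. R d * real (card {W\<in>S. d \<in> W}))"
      by (rule swap_count)
    also have "\<dots> = R 0 * real (card {W\<in>S. (0::'a) \<in> W}) + (\<Sum>d\<in>UNIV - {0}. R d * real (card {W\<in>S. d \<in> W}))"
      by (simp add: sum.remove[of UNIV 0])
    also have "\<dots> = Q * real N + (\<Sum>d\<in>UNIV - {0::'a}. R d * real c)"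
      using cnt0 cntd Q_def by simp
    also have "(\<Sum>d\<in>UNIV - {0::'a}. R d * real c) = real c * ((\<Sum>d\<in>UNIV. R d) - R 0)"
      by (simp add: sum_diff1 right_diff_distrib sum_distrib_left mult.commute)
    finally show ?thesis using sumR Q_def by (simp add: algebra_simps)
  qed
  define a where "a = real w * \<mu>"
  define V where "V = (\<Sum>W\<in>S. \<Sum>t\<in>UNIV. (X t W - a)^2)"
  have Vexp: "V = real w * (real N * Q + real c * (s^2 - Q)) - 2 * a * (real N * real w * s) + real N * real F * a^2"
  proof -
    have "V = (\<Sum>W\<in>S. (\<Sum>t\<in>UNIV. (X t W)^2) - 2 * a * (\<Sum>t\<in>UNIV. X t W) + real F * a^2)"
      unfolding V_def
      by (intro sum.cong refl) (simp add: power2_diff sum.distrib sum_subtractf sum_distrib_left F_def mult.commute mult.left_commute)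
    also have "\<dots> = (\<Sum>W\<in>S. (\<Sum>t\<in>UNIV. (X t W)^2)) - 2 * a * (\<Sum>W\<in>S. \<Sum>t\<in>UNIV. X t W) + real N * real F * a^2"
      by (simp add: sum.distrib sum_subtractf sum_distrib_left N_def)
    finally show ?thesis using T1 T2 by simp
  qed
  have Vle: "V \<le> real N * real w * s"
  proof -
    have Fm: "real F - 1 > 0" using F2 by simp
    have cF: "real c * (real F - 1) = real N * (real w - 1)" using sumcnt by (simp add: algebra_simps)
    have "(real F - 1) * V = real w * real N * (real F - real w) * (Q - s^2 / real F)"
    proof -
      have "(real F - 1) * V = real w * ((real F - 1) * real N * Q + (real c * (real F - 1)) * (s^2 - Q))
             - (real F - 1) * (2 * a * (real N * real w * s) - real N * real F * a^2)"
        unfolding Vexp by (simp add: algebra_simps)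
      also have "\<dots> = real w * ((real F - 1) * real N * Q + real N * (real w - 1) * (s^2 - Q))
             - (real F - 1) * (real N * real w^2 * s^2 / real F)"
        unfolding cF a_def mu_s using F2 by (simp add: field_simps power2_eq_square)
      also have "\<dots> = real w * real N * (real F - real w) * (Q - s^2 / real F)"
        using F2 by (simp add: field_simps power2_eq_square)
      finally show ?thesis .
    qed
    also have "\<dots> \<le> real w * real N * (real F - real w) * Q"
      using wF F2 s0 by (intro mult_left_mono) auto
    also have "\<dots> \<le> real w * real N * (real F - 1) * s"
    proof (rule mult_mono)
      show "real w * real N * (real F - real w) \<le> real w * real N * (real F - 1)"
        using assms(1) w_def prime_ge_1_nat[of p] by (intro mult_left_mono) (auto intro!: one_le_power)
      show "Q \<le> s" by (rule Qs)
      show "0 \<le> real w * real N * (real F - 1)" using F2 by simp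
      show "0 \<le> Q" unfolding QQ using g01 by (simp add: sum_nonneg)
    qed
    finally have "(real F - 1) * V \<le> (real F - 1) * (real N * real w * s)" by (simp add: ac_simps)
    thus ?thesis using Fm by simp
  qed
  have a16: "a > 16"
  proof -
    have "\<mu> \<le> 1" using mu_s sF F2 by simp
    thus ?thesis using numeric[OF assms(1,5,6) _ ] assms(9) unfolding a_def w_def \<mu>_def by simp
  qed
  define P where "P = (UNIV :: 'a set) \<times> S"
  define B where "B = {x\<in>P. X (fst x) (snd x) < a / 2}"
  define G where "G = {x\<in>P. \<not> X (fst x) (snd x) < a / 2}"
  have Pfin: "finite P" by simp
  have cardP: "card P = F * N" by (simp add: P_def F_def N_def card_cartesian_product)
  have PGB: "card G + card B = card P"
  proof -
    have "P = G \<union> B" "G \<inter> B = {}" by (auto simp: G_def B_def)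
    thus ?thesis using Pfin by (metis card_Un_disjoint finite_Un)
  qed
  have sumP: "(\<Sum>x\<in>P. (X (fst x) (snd x) - a)^2) = V"
    unfolding P_def V_def sum.cartesian_product' fst_conv snd_conv by (rule sum.swap)
  have "real (card B) * (a/2)^2 \<le> (\<Sum>x\<in>B. (X (fst x) (snd x) - a)^2)"
  proof (rule sum_bounded_below)
    fix x assume "x \<in> B"
    hence "X (fst x) (snd x) < a/2" by (simp add: B_def)
    hence "a/2 \<le> \<bar>X (fst x) (snd x) - a\<bar>" using a16 by simp
    hence "(a/2)^2 \<le> \<bar>X (fst x) (snd x) - a\<bar>^2" using a16 by (intro power_mono) auto
    thus "(a/2)^2 \<le> (X (fst x) (snd x) - a)^2" by simp
  qed
  also have "\<dots> \<le> (\<Sum>x\<in>P. (X (fst x) (snd x) - a)^2)"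
    by (rule sum_mono2) (auto simp: B_def Pfin)
  also have "\<dots> \<le> real N * real w * s" using sumP Vle by simp
  also have "\<dots> = real N * real F * a" unfolding a_def mu_s using F2 by simp
  finally have Bb: "real (card B) * (a/2)^2 \<le> real N * real F * a" .
  have Bsmall: "real (card B) < real F * real N / 4"
  proof (rule ccontr)
    assume "\<not> ?thesis"
    hence ge: "real (card B) \<ge> real F * real N / 4" by simp
    have "real F * real N > 0" using F2 Npos by simp
    hence "real (card B) * a > real (card B) * 16" using ge a16 by (intro mult_strict_left_mono) auto
    moreover have "real (card B) * a \<le> 4 * real N * real F"
    proof -
      have "real (card B) * a * a \<le> 4 * real N * real F * a" using Bb by (simp add: power2_eq_square field_simps)
      thus ?thesis using a16 by (simp add: mult_le_cancel_right)
    qed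
    ultimately show False using ge by (simp add: algebra_simps)
  qed
  have Geq: "{(t, W). W \<in> subspaces_dim p n' \<and>
              (\<Sum>m\<in>translate t W. g m) \<ge> expect g * real (card W) / 2} = G"
  proof -
    have tr: "(\<Sum>m\<in>translate t W. g m) = X t W" for t W
      unfolding translate_def X_def by (subst sum.reindex) (auto simp: inj_on_def)
    have SS: "subspaces_dim p n' = S" by (simp add: S_def)
    have "x \<in> {(t, W). W \<in> subspaces_dim p n' \<and>
              (\<Sum>m\<in>translate t W. g m) \<ge> expect g * real (card W) / 2} \<longleftrightarrow> x \<in> G" for x
    proof (cases x)
      case (Pair t W)
      show ?thesis
      proof (cases "W \<in> S")
        case True
        hence "expect g * real (card W) / 2 = a / 2" using SW(2)[OF True] by (simp add: a_def \<mu>_def)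
        then show ?thesis using True by (simp add: Pair SS tr G_def P_def not_less)
      next
        case False
        then show ?thesis by (simp add: Pair SS G_def P_def)
      qed
    qed
    then show ?thesis by blast
  qed
  have "real (card G) + real (card B) = real F * real N" using PGB cardP by (metis of_nat_add of_nat_mult)
  hence CG: "real (card G) > 3/4 * (real F * real N)" using Bsmall by linarith
  have FN: "real F * real N > 0" using F2 Npos by simp
  have "3/4 < real (card G) / (real F * real N)" using CG FN by (simp add: less_divide_eq)
  thus ?thesis unfolding Geq by (simp add: F_def N_def S_def)
qed

end
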